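(* Let the standing assumptions hold, let $\alpha>0$ and $p\in(0,1]$, and let $(\bm{x}^\star,\bm{w}^\star,\bm{u}_b^\star)$ satisfy $$\bm{w}^\star=\bm{x}^\star-\alpha\nabla F(\bm{x}^\star),\quad \bm{x}^\star=\mathrm{prox}_{\alpha R}\big(\bm{A}(\bm{w}^\star-\sqrt{\bm{B}}\bm{u}_b^\star)\big),\quad \bm{0}=\sqrt{\bm{B}}\big(\bm{w}^\star-\sqrt{\bm{B}}\bm{u}_b^\star\big),$$ with $\bm{u}_b^\star\in\mathrm{range}(\sqrt{\bm{B}})$. Then the iterates of the algorithm below satisfy, for every $k\ge 0$, $$\mathbb{E}\Big[\|\bm{x}^{k+1}-\bm{x}^\star\|^2+\tfrac{1}{p^2}\|\bm{u}^{k+1}-\bm{u}_b^\star\|^2\,\Big|\,\mathcal{F}_k\Big]\le \|\bm{w}^k-\bm{w}^\star\|^2+\big(1-p^2\sigma_m(\bm{B})\big)\tfrac{1}{p^2}\|\bm{u}^k-\bm{u}_b^\star\|^2,$$ where $\mathcal{F}_k$ is the $\sigma$-algebra generated by $\theta_0,\dots,\theta_{k-1}$ (the expectation is over $\theta_k$).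
   Context: Standing assumptions: $f_1,\dots,f_n:\mathbb{R}^d\to\mathbb{R}$ are $\mu$-strongly convex with $\mu\ge0$ and $L$-smooth ($L>0$); $r:\mathbb{R}^d\to\mathbb{R}\cup\{\infty\}$ is proper, closed, convex. For $\bm{x}=\mathrm{col}\{x_1,\dots,x_n\}\in\mathbb{R}^{nd}$, $F(\bm{x})=\sum_i f_i(x_i)$, $R(\bm{x})=\sum_i r(x_i)$, $\mathrm{prox}_{\alpha r}(x)=\arg\min_s\{r(s)+\frac1{2\alpha}\|s-x\|^2\}$ and $\mathrm{prox}_{\alpha R}$ acts blockwise. $W\in\mathbb{R}^{n\times n}$ is symmetric, $W\bm1=\bm1$, $W_{ij}>0$ on edges of an undirected connected graph and $W_{ij}=0$ for non-adjacent $i\ne j$. $A,B$ are polynomials in $W$ with $A^{\sf T}=A$, $A\bm1=\bm1$, $B\succeq0$, $\mathrm{null}(B)=\mathrm{span}(\bm1)$, $I-A^2-B\succeq0$; $\bm A=A\otimes I_d$, $\bm B=B\otimes I_d$, $\sqrt{\bm B}=\sqrt B\otimes I_d$ (PSD square root); $\sigma_m(\bm B)$ is the smallest nonzero singular value of $\bm B$. Algorithm (FlexATC, equivalent form): $\theta_0,\theta_1,\dots$ are i.i.d. in $\{0,1\}$ with $\mathrm{Prob}(\theta_k=1)=p$; $\bm{A}_k=\theta_k\bm{A}+(1-\theta_k)\bm{I}$ and $\sqrt{\bm{B}_k}=\theta_k\sqrt{\bm B}$. Given $\bm{x}^0\in\mathbb{R}^{nd}$ and $\bm{u}^0=\bm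 0$, for $k\ge0$: $\bm{w}^k=\bm{x}^k-\alpha\nabla F(\bm{x}^k)$, $\bm{x}^{k+1}=\mathrm{prox}_{\alpha R}\big(\bm{A}_k(\bm{w}^k-\sqrt{\bm B}\bm{u}^k)\big)$, $\bm{u}^{k+1}=\bm{u}^k+p\sqrt{\bm B_k}(\bm w^k-\sqrt{\bm B}\bm u^k)$. *)

theory Defs
  imports "HOL-Analysis.Analysis" "HOL-Probability.Probability"
          "HOL-Computational_Algebra.Polynomial"
begin

text \<open>Stacked vectors bold x = col(x_1,...,x_n) in R^{nd} are represented as
  elements of real^'d^'n (row i is x_i). Then (A \<otimes> I_d) x is exactly the
  matrix product A ** x, and the Euclidean norm of the stacked vector is norm x.\<close>

primrec mat_pow :: "real^'n^'n \<Rightarrow> nat \<Rightarrow> real^'n^'n" where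
  "mat_pow W 0 = mat 1"
| "mat_pow W (Suc k) = W ** mat_pow W k"

definition poly_mat :: "real poly \<Rightarrow> real^'n^'n \<Rightarrow> real^'n^'n" where
  "poly_mat q W = (\<Sum>i\<le>degree q. coeff q i *\<^sub>R mat_pow W i)"

definition is_poly_in :: "real^'n^'n \<Rightarrow> real^'n^'n \<Rightarrow> bool" where
  "is_poly_in A W \<longleftrightarrow> (\<exists>q. A = poly_mat q W)"

definition psd :: "real^'n^'n \<Rightarrow> bool" where
  "psd M \<longleftrightarrow> transpose M = M \<and> (\<forall>v. 0 \<le> v \<bullet> (M *v v))"

definition ones :: "real^'n" where "ones = (\<chi> i. 1)"

definition psd_sqrt :: "real^'n^'n \<Rightarrow> real^'n^'n" where
  "psd_sqrt M = (THE S. psd S \<and> S ** S = M)"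

definition real_eigenvalue :: "real^'n^'n \<Rightarrow> real \<Rightarrow> bool" where
  "real_eigenvalue M l \<longleftrightarrow> (\<exists>v. v \<noteq> 0 \<and> M *v v = l *\<^sub>R v)"

definition singular_values :: "real^'n^'n \<Rightarrow> real set" where
  "singular_values M = {sqrt l | l. real_eigenvalue (transpose M ** M) l}"

definition sigma_min_nz :: "real^'n^'n \<Rightarrow> real" where
  "sigma_min_nz M = Min {s \<in> singular_values M. s \<noteq> 0}"

definition mixing_matrix :: "real^'n^'n \<Rightarrow> bool" where
  "mixing_matrix W \<longleftrightarrow> transpose W = W \<and> W *v ones = ones \<and>
     (\<exists>E :: 'n \<Rightarrow> 'n \<Rightarrow> bool.
        (\<forall>i j. E i j \<longrightarrow> E j i) \<and> (\<forall>i. \<not> E i i) \<and>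
        (\<forall>i j. E\<^sup>*\<^sup>* i j) \<and>
        (\<forall>i j. E i j \<longrightarrow> W $ i $ j > 0) \<and>
        (\<forall>i j. i \<noteq> j \<longrightarrow> \<not> E i j \<longrightarrow> W $ i $ j = 0))"

definition strongly_convex :: "real \<Rightarrow> (real^'d \<Rightarrow> real) \<Rightarrow> bool" where
  "strongly_convex \<mu> f \<longleftrightarrow> convex_on UNIV (\<lambda>x. f x - (\<mu>/2) * (norm x)\<^sup>2)"

definition is_gradient :: "(real^'d \<Rightarrow> real) \<Rightarrow> (real^'d \<Rightarrow> real^'d) \<Rightarrow> bool" where
  "is_gradient f g \<longleftrightarrow> (\<forall>x. (f has_derivative (\<lambda>h. g x \<bullet> h)) (at x))"

definition L_smooth :: "real \<Rightarrow> (real^'d \<Rightarrow> real^'d) \<Rightarrow> bool" where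
  "L_smooth L g \<longleftrightarrow> (\<forall>x y. norm (g x - g y) \<le> L * norm (x - y))"

definition proper_closed_convex :: "(real^'d \<Rightarrow> ereal) \<Rightarrow> bool" where
  "proper_closed_convex r \<longleftrightarrow>
     (\<forall>x. r x \<noteq> -\<infinity>) \<and> (\<exists>x. r x \<noteq> \<infinity>) \<and>
     closed {(x, t::real). r x \<le> ereal t} \<and>
     (\<forall>x y t. 0 \<le> t \<and> t \<le> 1 \<longrightarrow>
        r ((1 - t) *\<^sub>R x + t *\<^sub>R y) \<le> ereal (1 - t) * r x + ereal t * r y)"

definition prox :: "real \<Rightarrow> (real^'d \<Rightarrow> ereal) \<Rightarrow> real^'d \<Rightarrow> real^'d" where
  "prox \<alpha> r x = (THE s. \<forall>z. r s + ereal (1/(2*\<alpha>) * (norm (s - x))\<^sup>2)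
                              \<le> r z + ereal (1/(2*\<alpha>) * (norm (z - x))\<^sup>2))"

definition gradF :: "('n \<Rightarrow> real^'d \<Rightarrow> real^'d) \<Rightarrow> real^'d^'n \<Rightarrow> real^'d^'n" where
  "gradF g x = (\<chi> i. g i (x $ i))"

definition proxR :: "real \<Rightarrow> (real^'d \<Rightarrow> ereal) \<Rightarrow> real^'d^'n \<Rightarrow> real^'d^'n" where
  "proxR \<alpha> r x = (\<chi> i. prox \<alpha> r (x $ i))"

section \<open>FlexATC (equivalent form)\<close>

definition flex_step ::
  "real \<Rightarrow> real \<Rightarrow> real^'n^'n \<Rightarrow> real^'n^'n \<Rightarrow> ('n \<Rightarrow> real^'d \<Rightarrow> real^'d)
   \<Rightarrow> (real^'d \<Rightarrow> ereal) \<Rightarrow> bool \<Rightarrow> (real^'d^'n) \<times> (real^'d^'n) \<Rightarrow> (real^'d^'n) \<times> (real^'d^'n)" where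
  "flex_step \<alpha> p A B g r th xu =
     (let x = fst xu; u = snd xu;
          w = x - \<alpha> *\<^sub>R gradF g x;
          y = w - psd_sqrt B ** u;
          Ak = (if th then A else mat 1);
          sBk = (if th then psd_sqrt B else 0)
      in (proxR \<alpha> r (Ak ** y), u + p *\<^sub>R (sBk ** y)))"

primrec flex_iter ::
  "real \<Rightarrow> real \<Rightarrow> real^'n^'n \<Rightarrow> real^'n^'n \<Rightarrow> ('n \<Rightarrow> real^'d \<Rightarrow> real^'d)
   \<Rightarrow> (real^'d \<Rightarrow> ereal) \<Rightarrow> real^'d^'n \<Rightarrow> (nat \<Rightarrow> bool) \<Rightarrow> nat \<Rightarrow> (real^'d^'n) \<times> (real^'d^'n)" where
  "flex_iter \<alpha> p A B g r x0 th 0 = (x0, 0)"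
| "flex_iter \<alpha> p A B g r x0 th (Suc k) =
     flex_step \<alpha> p A B g r (th k) (flex_iter \<alpha> p A B g r x0 th k)"

definition coin_filtration :: "'w measure \<Rightarrow> (nat \<Rightarrow> 'w \<Rightarrow> bool) \<Rightarrow> nat \<Rightarrow> 'w measure" where
  "coin_filtration M \<theta> k =
     sigma (space M) (\<Union>i\<in>{..<k}. {\<theta> i -` A \<inter> space M | A. A \<subseteq> (UNIV :: bool set)})"

end

theory Submission
  imports Defs
begin


lemma pcc_minorant:
  fixes r :: "real^'d \<Rightarrow> ereal"
  assumes r: "proper_closed_convex r"
  shows "\<exists>a b. \<forall>z. ereal (inner a z + b) \<le> r z"
proof -
  define E where "E = {(x, t::real). r x \<le> ereal t}"
  have cl: "closed E" using r unfolding proper_closed_convex_def E_def by simp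
  have cv: "convex E"
    unfolding convex_def
  proof (clarify)
    fix z1 t1 z2 t2 and u v :: real
    assume h: "(z1,t1) \<in> E" "(z2,t2) \<in> E" "0 \<le> u" "0 \<le> v" "u + v = 1"
    have u: "u = 1 - v" using h by simp
    have "r ((1 - v) *\<^sub>R z1 + v *\<^sub>R z2) \<le> ereal (1 - v) * r z1 + ereal v * r z2"
      using r h unfolding proper_closed_convex_def by auto
    also have "\<dots> \<le> ereal (1 - v) * ereal t1 + ereal v * ereal t2"
      using h u by (intro add_mono ereal_mult_left_mono) (auto simp: E_def)
    finally show "u *\<^sub>R (z1, t1) + v *\<^sub>R (z2, t2) \<in> E"
      using u by (simp add: E_def)
  qed
  obtain x0 where x0: "r x0 \<noteq> \<infinity>" using r unfolding proper_closed_convex_def by auto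
  have "r x0 \<noteq> -\<infinity>" using r unfolding proper_closed_convex_def by auto
  with x0 obtain r0 where r0: "r x0 = ereal r0" by (cases "r x0") auto
  have "(x0, r0 - 1) \<notin> E" using r0 by (simp add: E_def)
  from separating_hyperplane_closed_point[OF cv cl this]
  obtain a b where ab: "inner a (x0, r0 - 1) < b" "\<forall>x\<in>E. inner a x > b" by blast
  obtain a1 a2 where a: "a = (a1, a2)" by (cases a)
  have "(x0, r0) \<in> E" using r0 by (simp add: E_def)
  with ab have "b < inner a (x0, r0)" by blast
  with ab(1) a have a2: "a2 > 0" by (simp add: algebra_simps)
  have "ereal (inner (- a1 /\<^sub>R a2) z + b / a2) \<le> r z" for z
  proof (cases "r z")
    case (real t)
    then have "(z, t) \<in> E" by (simp add: E_def)
    with ab a have "inner a1 z + a2 * t > b" by (force simp: inner_Pair)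
    then have "b / a2 - inner a1 z / a2 < t" using a2 by (simp add: field_simps)
    then show ?thesis using real by (simp add: inner_minus_left divide_inverse mult.commute)
  next
    case PInf then show ?thesis by simp
  next
    case MInf then show ?thesis using r unfolding proper_closed_convex_def by auto
  qed
  then show ?thesis by blast
qed

lemma quad_bound_aux:
  fixes \<rho> c na K :: real
  assumes "0 \<le> \<rho>" "0 < c" "0 \<le> na" "c * \<rho>\<^sup>2 - na * \<rho> \<le> K"
  shows "\<rho> \<le> max 1 ((\<bar>K\<bar> + na) / c)"
proof (rule ccontr)
  assume "\<not> ?thesis"
  then have h: "\<rho> > 1" "\<rho> > (\<bar>K\<bar> + na) / c" by auto
  then have "c * \<rho> > \<bar>K\<bar> + na" using assms by (simp add: field_simps)
  then have "c * \<rho> - na > \<bar>K\<bar>" by simp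
  then have "\<rho> * (c * \<rho> - na) > \<rho> * \<bar>K\<bar>" using h by simp
  moreover have "\<rho> * \<bar>K\<bar> \<ge> \<bar>K\<bar>" using h by (simp add: mult_le_cancel_right1)
  ultimately have "\<rho> * (c * \<rho> - na) > K" by linarith
  then show False using assms(4) by (simp add: power2_eq_square algebra_simps)
qed

lemma pcc_min_exists:
  fixes r :: "real^'d \<Rightarrow> ereal"
  assumes r: "proper_closed_convex r" and c: "0 < c"
  shows "\<exists>s. \<forall>z. r s + ereal (c * (norm (s - x))\<^sup>2) \<le> r z + ereal (c * (norm (z - x))\<^sup>2)"
proof -
  obtain a b where ab: "\<And>z. ereal (inner a z + b) \<le> r z" using pcc_minorant[OF r] by blast
  define E where "E = {(x, t::real). r x \<le> ereal t}"
  have clE: "closed E" using r unfolding proper_closed_convex_def E_def by simp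
  obtain x0 where x0: "r x0 \<noteq> \<infinity>" using r unfolding proper_closed_convex_def by auto
  have "r x0 \<noteq> -\<infinity>" using r unfolding proper_closed_convex_def by auto
  with x0 obtain r0 where r0: "r x0 = ereal r0" by (cases "r x0") auto
  define h where "h = (\<lambda>p::(real^'d) \<times> real. snd p + c * (norm (fst p - x))\<^sup>2)"
  define V where "V = h (x0, r0)"
  define K where "K = V - b + norm a * norm x"
  define R1 where "R1 = max 1 ((\<bar>K\<bar> + norm a) / c)"
  define lo where "lo = b - norm a * (R1 + norm x)"
  have bnd: "dist x z \<le> R1 \<and> lo \<le> t \<and> t \<le> V" if zt: "r z \<le> ereal t" "h (z, t) \<le> V" for z t
  proof -
    have t1: "inner a z + b \<le> t" using ab[of z] zt(1) by (metis ereal_less_eq(3) order_trans)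
    have cs: "\<bar>inner a (z - x)\<bar> \<le> norm a * norm (z - x)" by (rule Cauchy_Schwarz_ineq2)
    have cs2: "\<bar>inner a x\<bar> \<le> norm a * norm x" by (rule Cauchy_Schwarz_ineq2)
    have "inner a z = inner a (z - x) + inner a x" by (simp add: inner_diff_right)
    then have "inner a z \<ge> - (norm a * norm (z - x)) - norm a * norm x" using cs cs2 by linarith
    then have "c * (norm (z - x))\<^sup>2 - norm a * norm (z - x) \<le> K"
      using t1 zt(2) unfolding h_def K_def by simp
    from quad_bound_aux[OF _ c _ this] have d: "norm (z - x) \<le> R1" unfolding R1_def by simp
    then have "dist x z \<le> R1" by (simp add: dist_norm norm_minus_commute)
    moreover have "norm z \<le> R1 + norm x" using d norm_triangle_sub[of z x] by linarith
    then have "norm a * norm z \<le> norm a * (R1 + norm x)" by (rule mult_left_mono) simp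
    then have "inner a z \<ge> - (norm a * (R1 + norm x))"
      using Cauchy_Schwarz_ineq2[of a z] by linarith
    then have "lo \<le> t" using t1 unfolding lo_def by simp
    moreover have "0 \<le> c * (norm (z - x))\<^sup>2" using c by simp
    then have "t \<le> V" using zt(2) unfolding h_def by simp
    ultimately show ?thesis by simp
  qed
  define P where "P = (cball x R1 \<times> {lo..V}) \<inter> (E \<inter> {p. h p \<le> V})"
  have contH: "continuous_on UNIV h" unfolding h_def by (intro continuous_intros)
  have "closed {p. h p \<le> V}"
    using closed_Collect_le[OF contH continuous_on_const] .
  then have cP: "compact P" unfolding P_def
    by (intro compact_Int_closed compact_Times compact_cball compact_Icc closed_Int clE)
  have x0P: "(x0, r0) \<in> P" using bnd[of x0 r0] r0 unfolding P_def E_def V_def by auto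
  obtain q where qP: "q \<in> P" and qmin: "\<And>y. y \<in> P \<Longrightarrow> h q \<le> h y"
    using continuous_attains_inf[OF cP _ continuous_on_subset[OF contH]] x0P by blast
  obtain zs ts where q: "q = (zs, ts)" by (cases q)
  have rzs: "r zs \<le> ereal ts" using qP q unfolding P_def E_def by auto
  have hq: "h q \<le> V" using qmin[OF x0P] unfolding V_def .
  show ?thesis
  proof (intro exI allI)
    fix z
    have "r zs + ereal (c * (norm (zs - x))\<^sup>2) \<le> ereal ts + ereal (c * (norm (zs - x))\<^sup>2)"
      using rzs by (intro add_right_mono)
    also have "\<dots> = ereal (h q)" unfolding h_def q by simp
    also have "\<dots> \<le> r z + ereal (c * (norm (z - x))\<^sup>2)"
    proof (cases "r z")
      case (real t)
      show ?thesis
      proof (cases "h (z, t) \<le> V")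
        case True
        then have "(z, t) \<in> P" using bnd[of z t] real unfolding P_def E_def by auto
        then have "h q \<le> h (z, t)" by (rule qmin)
        then show ?thesis using real unfolding h_def by simp
      next
        case False
        then show ?thesis using real hq unfolding h_def by simp
      qed
    next
      case PInf then show ?thesis by simp
    next
      case MInf then show ?thesis using r unfolding proper_closed_convex_def by auto
    qed
    finally show "r zs + ereal (c * (norm (zs - x))\<^sup>2) \<le> r z + ereal (c * (norm (z - x))\<^sup>2)" .
  qed
qed

lemma pcc_finite_val:
  fixes r :: "real^'d \<Rightarrow> ereal"
  assumes r: "proper_closed_convex r" and c: "0 < c"
    and s: "\<forall>z. r s + ereal (c * (norm (s - x))\<^sup>2) \<le> r z + ereal (c * (norm (z - x))\<^sup>2)"
  shows "\<exists>v. r s = ereal v"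
proof -
  obtain x0 where x0: "r x0 \<noteq> \<infinity>" using r unfolding proper_closed_convex_def by auto
  have "r s + ereal (c * (norm (s - x))\<^sup>2) \<le> r x0 + ereal (c * (norm (x0 - x))\<^sup>2)" using s by blast
  then have "r s \<noteq> \<infinity>" using x0 by auto
  moreover have "r s \<noteq> -\<infinity>" using r unfolding proper_closed_convex_def by auto
  ultimately show ?thesis by (cases "r s") auto
qed

lemma pcc_min_unique:
  fixes r :: "real^'d \<Rightarrow> ereal"
  assumes r: "proper_closed_convex r" and c: "0 < c"
    and s1: "\<forall>z. r s1 + ereal (c * (norm (s1 - x))\<^sup>2) \<le> r z + ereal (c * (norm (z - x))\<^sup>2)"
    and s2: "\<forall>z. r s2 + ereal (c * (norm (s2 - x))\<^sup>2) \<le> r z + ereal (c * (norm (z - x))\<^sup>2)"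
  shows "s1 = s2"
proof -
  obtain a1 where a1: "r s1 = ereal a1" using pcc_finite_val[OF r c s1] by blast
  obtain a2 where a2: "r s2 = ereal a2" using pcc_finite_val[OF r c s2] by blast
  define m where "m = (1 - 1/2) *\<^sub>R s1 + (1/2::real) *\<^sub>R s2"
  have cv: "\<And>x y t. 0 \<le> t \<Longrightarrow> t \<le> 1 \<Longrightarrow> r ((1 - t) *\<^sub>R x + t *\<^sub>R y) \<le> ereal (1 - t) * r x + ereal t * r y"
    using r unfolding proper_closed_convex_def by blast
  have rm: "r m \<le> ereal (1 - 1/2) * r s1 + ereal (1/2) * r s2"
    unfolding m_def by (rule cv) simp_all
  have e12: "a1 + c * (norm (s1 - x))\<^sup>2 \<le> a2 + c * (norm (s2 - x))\<^sup>2"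
    using s1 a1 a2 by (metis ereal_less_eq(3) plus_ereal.simps(1))
  have e21: "a2 + c * (norm (s2 - x))\<^sup>2 \<le> a1 + c * (norm (s1 - x))\<^sup>2"
    using s2 a1 a2 by (metis ereal_less_eq(3) plus_ereal.simps(1))
  have pl: "(norm (m - x))\<^sup>2 = ((norm (s1 - x))\<^sup>2 + (norm (s2 - x))\<^sup>2) / 2 - (norm (s1 - s2))\<^sup>2 / 4"
    unfolding m_def power2_norm_eq_inner
    by (simp add: inner_add_left inner_add_right inner_diff_left inner_diff_right inner_commute field_simps)
  have "ereal (a1 + c * (norm (s1 - x))\<^sup>2) \<le> r m + ereal (c * (norm (m - x))\<^sup>2)"
    using s1 a1 by (metis plus_ereal.simps(1))
  also have "\<dots> \<le> ereal (a1/2 + a2/2) + ereal (c * (norm (m - x))\<^sup>2)"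
    using rm a1 a2 by (intro add_right_mono) (simp add: field_simps)
  finally have "a1 + c * (norm (s1 - x))\<^sup>2 \<le> a1/2 + a2/2 + c * (norm (m - x))\<^sup>2" by simp
  moreover have "c * (norm (m - x))\<^sup>2 = c * (norm (s1 - x))\<^sup>2 / 2 + c * (norm (s2 - x))\<^sup>2 / 2 - c * (norm (s1 - s2))\<^sup>2 / 4"
    unfolding pl by (simp add: algebra_simps)
  ultimately have "c * (norm (s1 - s2))\<^sup>2 \<le> 0" using e12 e21 by linarith
  then have "norm (s1 - s2) = 0" using c by (simp add: mult_le_0_iff)
  then show ?thesis by simp
qed

lemma prox_min:
  fixes r :: "real^'d \<Rightarrow> ereal"
  assumes r: "proper_closed_convex r" and alpha: "0 < \<alpha>"
  shows "\<forall>z. r (prox \<alpha> r x) + ereal (1/(2*\<alpha>) * (norm (prox \<alpha> r x - x))\<^sup>2)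
              \<le> r z + ereal (1/(2*\<alpha>) * (norm (z - x))\<^sup>2)"
proof -
  have c: "0 < 1/(2*\<alpha>)" using alpha by simp
  have "\<exists>!s. \<forall>z. r s + ereal (1/(2*\<alpha>) * (norm (s - x))\<^sup>2) \<le> r z + ereal (1/(2*\<alpha>) * (norm (z - x))\<^sup>2)"
    using pcc_min_exists[OF r c, of x] pcc_min_unique[OF r c] by blast
  then show ?thesis unfolding prox_def by (rule theI')
qed

lemma prox_var_ineq:
  fixes r :: "real^'d \<Rightarrow> ereal"
  assumes r: "proper_closed_convex r" and alpha: "0 < \<alpha>"
    and s: "s = prox \<alpha> r x" and rs: "r s = ereal vs" and rz: "r z = ereal vz"
  shows "inner (x - s) (z - s) \<le> \<alpha> * (vz - vs)"
proof -
  define c where "c = 1/(2*\<alpha>)"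
  have c: "0 < c" using alpha by (simp add: c_def)
  have mn: "\<And>y. r s + ereal (c * (norm (s - x))\<^sup>2) \<le> r y + ereal (c * (norm (y - x))\<^sup>2)"
    using prox_min[OF r alpha, of x] s unfolding c_def by blast
  define d where "d = z - s"
  define D where "D = inner (x - s) d - \<alpha> * (vz - vs)"
  have key: "D \<le> t * (norm d)\<^sup>2 / 2" if t: "0 < t" "t \<le> 1" for t
  proof -
    define zt where "zt = (1 - t) *\<^sub>R s + t *\<^sub>R z"
    have "r zt \<le> ereal (1 - t) * r s + ereal t * r z"
      using r t unfolding proper_closed_convex_def zt_def by auto
    then have rzt: "r zt \<le> ereal ((1 - t) * vs + t * vz)" using rs rz by simp
    have "ereal (vs + c * (norm (s - x))\<^sup>2) \<le> r zt + ereal (c * (norm (zt - x))\<^sup>2)"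
      using mn[of zt] rs by simp
    also have "\<dots> \<le> ereal ((1 - t) * vs + t * vz) + ereal (c * (norm (zt - x))\<^sup>2)"
      using rzt by (rule add_right_mono)
    finally have i1: "vs + c * (norm (s - x))\<^sup>2 \<le> (1 - t) * vs + t * vz + c * (norm (zt - x))\<^sup>2" by simp
    have zt: "zt - x = (s - x) + t *\<^sub>R d" unfolding zt_def d_def by (simp add: algebra_simps)
    have nz: "(norm (zt - x))\<^sup>2 = (norm (s - x))\<^sup>2 + 2 * t * inner (s - x) d + t\<^sup>2 * (norm d)\<^sup>2"
      unfolding zt power2_norm_eq_inner
      by (simp add: inner_add_left inner_add_right inner_commute power2_eq_square algebra_simps)
    have "t * vs \<le> t * vz + c * (2 * t * inner (s - x) d + t\<^sup>2 * (norm d)\<^sup>2)"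
      using i1 nz by (simp add: algebra_simps)
    then have "t * vs \<le> t * (vz + 2 * c * inner (s - x) d + c * t * (norm d)\<^sup>2)"
      by (simp add: algebra_simps power2_eq_square)
    then have "vs \<le> vz + 2 * c * inner (s - x) d + c * t * (norm d)\<^sup>2"
      using t by simp
    then have "\<alpha> * vs \<le> \<alpha> * (vz + 2 * c * inner (s - x) d + c * t * (norm d)\<^sup>2)"
      using alpha by simp
    also have "\<dots> = \<alpha> * vz + inner (s - x) d + t * (norm d)\<^sup>2 / 2"
      using alpha unfolding c_def by (simp add: field_simps)
    finally show ?thesis unfolding D_def by (simp add: inner_diff_left algebra_simps)
  qed
  have "D \<le> 0"
  proof (rule ccontr)
    assume "\<not> D \<le> 0"
    then have D0: "D > 0" by simp
    define t where "t = min 1 (D / ((norm d)\<^sup>2 + 1))"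
    have "(norm d)\<^sup>2 + 1 > 0" by (simp add: add_nonneg_pos)
    then have t0: "0 < t" "t \<le> 1" using D0 by (auto simp: t_def)
    have "t * (norm d)\<^sup>2 \<le> D / ((norm d)\<^sup>2 + 1) * (norm d)\<^sup>2"
      by (rule mult_right_mono) (auto simp: t_def)
    also have "\<dots> < D"
    proof -
      have n1: "(norm d)\<^sup>2 + 1 > 0" by (simp add: add_nonneg_pos)
      have "D * (norm d)\<^sup>2 < D * ((norm d)\<^sup>2 + 1)" using D0 by simp
      then show ?thesis using n1 by (simp add: pos_divide_less_eq)
    qed
    finally have "t * (norm d)\<^sup>2 / 2 < D" using D0 by simp
    with key[OF t0] show False by simp
  qed
  then show ?thesis unfolding D_def d_def by simp
qed

lemma prox_nonexp:
  fixes r :: "real^'d \<Rightarrow> ereal"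
  assumes r: "proper_closed_convex r" and alpha: "0 < \<alpha>"
  shows "norm (prox \<alpha> r x - prox \<alpha> r y) \<le> norm (x - y)"
proof -
  define s where "s = prox \<alpha> r x"
  define s' where "s' = prox \<alpha> r y"
  have c: "0 < 1/(2*\<alpha>)" using alpha by simp
  obtain vs where vs: "r s = ereal vs" using pcc_finite_val[OF r c prox_min[OF r alpha, of x]] s_def by blast
  obtain vs' where vs': "r s' = ereal vs'" using pcc_finite_val[OF r c prox_min[OF r alpha, of y]] s'_def by blast
  have i1: "inner (x - s) (s' - s) \<le> \<alpha> * (vs' - vs)" by (rule prox_var_ineq[OF r alpha s_def vs vs'])
  have i2: "inner (y - s') (s - s') \<le> \<alpha> * (vs - vs')" by (rule prox_var_ineq[OF r alpha s'_def vs' vs])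
  have "inner (x - s) (s' - s) + inner (y - s') (s - s') \<le> 0" using i1 i2 by (simp add: algebra_simps)
  then have "(norm (s - s'))\<^sup>2 \<le> inner (x - y) (s - s')"
    unfolding power2_norm_eq_inner by (simp add: inner_diff_left inner_diff_right inner_commute algebra_simps)
  also have "\<dots> \<le> norm (x - y) * norm (s - s')" by (rule norm_cauchy_schwarz)
  finally have "norm (s - s') * norm (s - s') \<le> norm (x - y) * norm (s - s')" by (simp add: power2_eq_square)
  then show ?thesis unfolding s_def s'_def
    by (metis mult_right_le_imp_le norm_ge_zero norm_le_zero_iff order.trans s_def s'_def mult_le_0_iff not_le)
qed




lemma sym_inner:
  fixes M :: "real^'n^'n"
  assumes "transpose M = M"
  shows "inner x (M *v y) = inner (M *v x) y"
proof -
  have "inner x (M *v y) = inner (x v* M) y" by (simp add: dot_lmul_matrix)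
  also have "x v* M = transpose M *v x" by simp
  finally show ?thesis using assms by simp
qed

lemma real_tiny_aux:
  fixes a K :: real
  assumes "\<And>t. 2 * t * a \<le> t\<^sup>2 * K"
  shows "a = 0"
proof (rule ccontr)
  assume a: "a \<noteq> 0"
  define t where "t = a / (\<bar>K\<bar> + 1)"
  have p: "\<bar>K\<bar> + 1 > 0" by simp
  define D where "D = \<bar>K\<bar> + 1"
  have pD: "D > 0" unfolding D_def by simp
  have "2 * t * a \<le> t\<^sup>2 * K" by (rule assms)
  moreover have "2 * t * a = 2 * a\<^sup>2 / D" unfolding t_def D_def by (simp add: power2_eq_square)
  moreover have "t\<^sup>2 * K = a\<^sup>2 * K / D\<^sup>2" unfolding t_def D_def by (simp add: power_divide)
  ultimately have i: "2 * a\<^sup>2 / D \<le> a\<^sup>2 * K / D\<^sup>2" by simp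
  have e1: "(2 * a\<^sup>2 / D) * D\<^sup>2 = a\<^sup>2 * (2 * D)" using pD by (simp add: power2_eq_square)
  have e2: "(a\<^sup>2 * K / D\<^sup>2) * D\<^sup>2 = a\<^sup>2 * K" using pD by simp
  have "(2 * a\<^sup>2 / D) * D\<^sup>2 \<le> (a\<^sup>2 * K / D\<^sup>2) * D\<^sup>2" using i by (rule mult_right_mono) simp
  then have "a\<^sup>2 * (2 * D) \<le> a\<^sup>2 * K" using e1 e2 by simp
  moreover have "a\<^sup>2 > 0" using a by simp
  ultimately have "2 * D \<le> K" by simp
  then have "2 * (\<bar>K\<bar> + 1) \<le> K" unfolding D_def .
  then show False by (cases "K \<ge> 0") auto
qed

lemma eigvec_exists:
  fixes M :: "real^'n^'n"
  assumes sym: "transpose M = M" and V: "subspace V" and inv: "\<And>x. x \<in> V \<Longrightarrow> M *v x \<in> V"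
    and ne: "V \<noteq> {0}"
  shows "\<exists>v\<in>V. norm v = 1 \<and> M *v v = inner v (M *v v) *\<^sub>R v"
proof -
  define q where "q = (\<lambda>x. inner x (M *v x))"
  define K where "K = V \<inter> sphere 0 1"
  have cK: "compact K" unfolding K_def
    by (intro closed_Int_compact closed_subspace V compact_sphere)
  obtain y where y: "y \<in> V" "y \<noteq> 0" using ne V subspace_0 by blast
  have "y /\<^sub>R norm y \<in> K" using y V unfolding K_def by (simp add: subspace_scale)
  then have Kne: "K \<noteq> {}" by blast
  have cq: "continuous_on K q" unfolding q_def by (intro continuous_intros)
  obtain x0 where x0K: "x0 \<in> K" and x0max: "\<And>z. z \<in> K \<Longrightarrow> q z \<le> q x0"
    using continuous_attains_sup[OF cK Kne cq] by blast
  define m where "m = q x0"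
  have x0: "x0 \<in> V" "norm x0 = 1" using x0K unfolding K_def by auto
  have qscale: "q (c *\<^sub>R z) = c\<^sup>2 * q z" for c z
    unfolding q_def by (simp add: matrix_vector_mult_scaleR power2_eq_square)
  have bound: "q z \<le> m * (norm z)\<^sup>2" if z: "z \<in> V" for z
  proof (cases "z = 0")
    case True then show ?thesis by (simp add: q_def)
  next
    case False
    have "z /\<^sub>R norm z \<in> K" using z V False unfolding K_def by (simp add: subspace_scale)
    then have "q (z /\<^sub>R norm z) \<le> m" using x0max m_def by simp
    then have "q z / (norm z)\<^sup>2 \<le> m" using qscale[of "inverse (norm z)" z]
      by (simp add: power_inverse divide_inverse mult.commute)
    then show ?thesis using False by (simp add: divide_le_eq mult.commute)
  qed
  define c where "c = inner x0 (M *v x0)"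
  define h where "h = M *v x0 - c *\<^sub>R x0"
  have hV: "h \<in> V" unfolding h_def using V x0 inv by (simp add: subspace_diff subspace_scale)
  have hx0: "inner x0 h = 0" unfolding h_def c_def using x0
    by (simp add: inner_diff_right norm_eq_1[symmetric])
  have "2 * t * inner (M *v x0) h \<le> t\<^sup>2 * (m * (norm h)\<^sup>2 - q h)" for t
  proof -
    have "x0 + t *\<^sub>R h \<in> V" using x0 hV V by (simp add: subspace_add subspace_scale)
    then have b: "q (x0 + t *\<^sub>R h) \<le> m * (norm (x0 + t *\<^sub>R h))\<^sup>2" by (rule bound)
    have n: "(norm (x0 + t *\<^sub>R h))\<^sup>2 = 1 + t\<^sup>2 * (norm h)\<^sup>2"
      using x0 hx0 norm_eq_1[of x0] unfolding power2_norm_eq_inner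
      by (simp add: inner_add_left inner_add_right inner_commute power2_eq_square)
    have s: "inner h (M *v x0) = inner (M *v h) x0" by (rule sym_inner[OF sym])
    have e: "q (x0 + t *\<^sub>R h) = m + 2 * t * inner (M *v x0) h + t\<^sup>2 * q h"
      unfolding q_def m_def using s
      by (simp add: matrix_vector_right_distrib matrix_vector_mult_scaleR inner_add_left inner_add_right
          inner_commute power2_eq_square algebra_simps)
    show ?thesis using b n e by (simp add: algebra_simps)
  qed
  then have "inner (M *v x0) h = 0" by (rule real_tiny_aux)
  then have "inner h h = 0" using hx0 unfolding h_def by (simp add: inner_diff_left inner_commute)
  then have "h = 0" by simp
  then have "M *v x0 = c *\<^sub>R x0" unfolding h_def by simp
  then show ?thesis using x0 unfolding c_def by blast
qed

lemma eigenbasis_sub: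
  fixes M :: "real^'n^'n"
  assumes sym: "transpose M = M"
  shows "subspace V \<Longrightarrow> (\<And>x. x \<in> V \<Longrightarrow> M *v x \<in> V) \<Longrightarrow>
    \<exists>E. E \<subseteq> V \<and> finite E \<and> pairwise orthogonal E \<and>
        (\<forall>v\<in>E. norm v = 1 \<and> M *v v = inner v (M *v v) *\<^sub>R v) \<and> span E = V"
proof (induct "dim V" arbitrary: V rule: less_induct)
  case less
  show ?case
  proof (cases "V = {0}")
    case True
    then show ?thesis by (intro exI[of _ "{}"]) auto
  next
    case False
    obtain v where v: "v \<in> V" "norm v = 1" "M *v v = inner v (M *v v) *\<^sub>R v"
      using eigvec_exists[OF sym less.prems(1) less.prems(2) False] by blast
    define l where "l = inner v (M *v v)"
    have vi: "inner v v = 1" using v(2) norm_eq_1 by blast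
    define V' where "V' = {x \<in> V. inner v x = 0}"
    have sV': "subspace V'" using less.prems(1) unfolding V'_def subspace_def
      by (auto simp: inner_add_right)
    have invV': "M *v x \<in> V'" if "x \<in> V'" for x
    proof -
      have a1: "M *v x \<in> V" using that less.prems(2) unfolding V'_def by auto
      have a2: "inner v (M *v x) = inner (M *v v) x" by (rule sym_inner[OF sym])
      have mv: "M *v v = l *\<^sub>R v" using v(3) unfolding l_def .
      have "inner v (M *v x) = l * inner v x" using a2 mv by simp
      with a1 show ?thesis using that unfolding V'_def by simp
    qed
    have "v \<notin> V'" using vi unfolding V'_def by auto
    then have "V' \<subset> V" using v(1) unfolding V'_def by blast
    moreover have "span V' = V'" using sV' by (metis span_eq_iff)
    moreover have "span V = V" using less.prems(1) by (metis span_eq_iff)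
    ultimately have "span V' \<subset> span V" by (simp only:)
    then have "dim V' < dim V" by (rule dim_psubset)
    from less.hyps[OF this sV' invV'] obtain E' where
      E': "E' \<subseteq> V'" "finite E'" "pairwise orthogonal E'"
          "\<forall>v\<in>E'. norm v = 1 \<and> M *v v = inner v (M *v v) *\<^sub>R v" "span E' = V'" by blast
    have vE': "orthogonal v y" if "y \<in> E'" for y
      using that E'(1) unfolding V'_def orthogonal_def by auto
    have "span (insert v E') = V"
    proof
      show "span (insert v E') \<subseteq> V" using E'(1) v(1) less.prems(1) unfolding V'_def
        by (intro span_minimal) auto
      show "V \<subseteq> span (insert v E')"
      proof
        fix x assume x: "x \<in> V"
        have "x - inner v x *\<^sub>R v \<in> V'" unfolding V'_def using x v(1) less.prems(1) vi
          by (simp add: subspace_diff subspace_scale inner_diff_right)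
        then show "x \<in> span (insert v E')" using E'(5) span_breakdown_eq by blast
      qed
    qed
    then show ?thesis using E' v vE' V'_def
      by (intro exI[of _ "insert v E'"])
         (auto simp: pairwise_insert orthogonal_commute)
  qed
qed

lemma eigenbasis:
  fixes M :: "real^'n^'n"
  assumes sym: "transpose M = M"
  shows "\<exists>E. finite E \<and> pairwise orthogonal E \<and>
        (\<forall>v\<in>E. norm v = 1 \<and> M *v v = inner v (M *v v) *\<^sub>R v) \<and> span E = UNIV"
  using eigenbasis_sub[OF sym, of UNIV] by auto

lemma onb_expand:
  fixes E :: "(real^'n) set"
  assumes fin: "finite E" and po: "pairwise orthogonal E" and nrm: "\<forall>v\<in>E. norm v = 1"
    and sp: "span E = UNIV"
  shows "x = (\<Sum>v\<in>E. inner v x *\<^sub>R v)"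
proof -
  define y where "y = x - (\<Sum>v\<in>E. inner v x *\<^sub>R v)"
  have "orthogonal y w" if w: "w \<in> E" for w
  proof -
    have "inner w (\<Sum>v\<in>E. inner v x *\<^sub>R v) = (\<Sum>v\<in>E. inner v x * inner w v)"
      by (simp add: inner_sum_right)
    also have "\<dots> = (\<Sum>v\<in>E. if v = w then inner w x else 0)"
    proof (rule sum.cong)
      fix v assume v: "v \<in> E"
      show "inner v x * inner w v = (if v = w then inner w x else 0)"
      proof (cases "v = w")
        case True then show ?thesis using nrm w norm_eq_1 by auto
      next
        case False then show ?thesis using po v w unfolding pairwise_def orthogonal_def by auto
      qed
    qed simp
    also have "\<dots> = inner w x" using w fin by simp
    finally show ?thesis unfolding y_def orthogonal_def by (simp add: inner_diff_right inner_commute)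
  qed
  then have "orthogonal y y" using orthogonal_to_span[of y E y] sp by (simp add: orthogonal_commute)
  then have "y = 0" by (simp add: orthogonal_def)
  then show ?thesis unfolding y_def by simp
qed

lemma mv_sum: "(A::real^'n^'m) *v (\<Sum>v\<in>E. f v) = (\<Sum>v\<in>E. A *v f v)"
  using linear_sum[OF matrix_vector_mul_linear, of A f E] by simp

lemma psd_sym: "psd M \<Longrightarrow> transpose M = M" unfolding psd_def by simp

lemma psd_nonneg: "psd M \<Longrightarrow> 0 \<le> inner v (M *v v)" unfolding psd_def by simp

lemma sqrt_on_eig:
  fixes S B :: "real^'n^'n"
  assumes S: "psd S" and SS: "S ** S = B" and ev: "B *v v = l *\<^sub>R v"
  shows "S *v v = sqrt l *\<^sub>R v"
proof -
  have symS: "transpose S = S" using S by (rule psd_sym)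
  have BS: "B *v x = S *v (S *v x)" for x using SS by (simp add: matrix_vector_mul_assoc)
  have nSv: "inner (S *v v) (S *v v) = l * inner v v"
  proof -
    have "inner (S *v v) (S *v v) = inner v (S *v (S *v v))" using sym_inner[OF symS, of v "S *v v"] by simp
    also have "\<dots> = inner v (l *\<^sub>R v)" using BS[of v] ev by simp
    finally show ?thesis by simp
  qed
  show ?thesis
  proof (cases "l > 0")
    case False
    have "l * inner v v \<le> 0" using False by (simp add: mult_nonpos_nonneg)
    then have "inner (S *v v) (S *v v) = 0" using nSv by (metis inner_ge_zero order_antisym)
    then have Sv: "S *v v = 0" by simp
    have "l * inner v v = 0" using nSv Sv by simp
    then have "l = 0 \<or> v = 0" by simp
    then show ?thesis using Sv by auto
  next
    case True
    define \<sigma> where "\<sigma> = sqrt l"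
    have s2: "\<sigma> * \<sigma> = l" using True unfolding \<sigma>_def by simp
    define w where "w = S *v v - \<sigma> *\<^sub>R v"
    have "S *v w = B *v v - \<sigma> *\<^sub>R (S *v v)"
      unfolding w_def by (simp add: BS matrix_vector_mult_diff_distrib matrix_vector_mult_scaleR)
    also have "\<dots> = - \<sigma> *\<^sub>R w" unfolding w_def ev s2[symmetric] by (simp add: algebra_simps)
    finally have Sw: "S *v w = - \<sigma> *\<^sub>R w" .
    have "0 \<le> inner w (S *v w)" by (rule psd_nonneg[OF S])
    then have "0 \<le> - \<sigma> * inner w w" using Sw by simp
    moreover have "\<sigma> > 0" using True unfolding \<sigma>_def by simp
    ultimately have "inner w w \<le> 0" by (simp add: mult_le_0_iff)
    then have "inner w w = 0" using inner_ge_zero[of w] by linarith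
    then have "w = 0" by simp
    then show ?thesis unfolding w_def \<sigma>_def by simp
  qed
qed

lemma psd_sqrt_props:
  fixes B :: "real^'n^'n"
  assumes B: "psd B"
  shows "psd (psd_sqrt B) \<and> psd_sqrt B ** psd_sqrt B = B"
proof -
  obtain E where E: "finite E" "pairwise orthogonal E"
      "\<forall>v\<in>E. norm v = 1 \<and> B *v v = inner v (B *v v) *\<^sub>R v" "span E = UNIV"
    using eigenbasis[OF psd_sym[OF B]] by blast
  define lam where "lam v = inner v (B *v v)" for v
  have lam0: "lam v \<ge> 0" for v unfolding lam_def by (rule psd_nonneg[OF B])
  have exp: "x = (\<Sum>v\<in>E. inner v x *\<^sub>R v)" for x by (rule onb_expand) (use E in auto)
  have Bv: "B *v v = lam v *\<^sub>R v" if "v \<in> E" for v using E(3) that unfolding lam_def by auto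
  have vw: "inner v w = (if v = w then 1 else 0)" if "v \<in> E" "w \<in> E" for v w
    using E(2,3) that norm_eq_1 unfolding pairwise_def orthogonal_def by auto
  define S0 where "S0 = (\<chi> i j. \<Sum>v\<in>E. sqrt (lam v) * v$i * v$j)"
  have S0x: "S0 *v x = (\<Sum>v\<in>E. (sqrt (lam v) * inner v x) *\<^sub>R v)" for x
    unfolding S0_def
    by (simp add: vec_eq_iff matrix_vector_mult_def inner_vec_def sum_distrib_left sum_distrib_right
        sum_component sum.swap[of _ E] algebra_simps)
  have S0v: "S0 *v w = sqrt (lam w) *\<^sub>R w" if w: "w \<in> E" for w
  proof -
    have "S0 *v w = (\<Sum>v\<in>E. if v = w then sqrt (lam w) *\<^sub>R w else 0)"
      unfolding S0x by (rule sum.cong) (auto simp: vw w)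
    also have "\<dots> = sqrt (lam w) *\<^sub>R w" using w E(1) by simp
    finally show ?thesis .
  qed
  have uniq: "S *v x = S0 *v x" if S: "psd S" "S ** S = B" for S x
  proof -
    have "S *v x = (\<Sum>v\<in>E. inner v x *\<^sub>R (S *v v))"
      by (subst exp) (simp add: mv_sum matrix_vector_mult_scaleR)
    also have "\<dots> = (\<Sum>v\<in>E. inner v x *\<^sub>R (sqrt (lam v) *\<^sub>R v))"
      using sqrt_on_eig[OF S Bv] by simp
    also have "\<dots> = S0 *v x" unfolding S0x by (simp add: mult.commute)
    finally show ?thesis .
  qed
  have symS0: "transpose S0 = S0" unfolding S0_def by (simp add: transpose_def vec_eq_iff mult.commute mult.left_commute)
  have psdS0: "psd S0" unfolding psd_def
  proof (intro conjI allI symS0)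
    fix v
    have "inner v (S0 *v v) = (\<Sum>w\<in>E. sqrt (lam w) * (inner w v)\<^sup>2)"
      unfolding S0x by (simp add: inner_sum_right power2_eq_square inner_commute mult.assoc)
    also have "\<dots> \<ge> 0" by (intro sum_nonneg mult_nonneg_nonneg) (simp_all add: lam0)
    finally show "0 \<le> inner v (S0 *v v)" .
  qed
  have SS0: "S0 ** S0 = B"
  proof (subst matrix_eq, intro allI)
    fix x
    have "(S0 ** S0) *v x = (\<Sum>v\<in>E. (sqrt (lam v) * inner v x) *\<^sub>R (S0 *v v))"
      by (simp add: matrix_vector_mul_assoc[symmetric] S0x mv_sum matrix_vector_mult_scaleR)
    also have "\<dots> = (\<Sum>v\<in>E. (inner v x) *\<^sub>R (lam v *\<^sub>R v))"
      by (rule sum.cong) (simp_all add: S0v lam0)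
    also have "\<dots> = B *v x"
      by (subst (2) exp) (simp add: mv_sum matrix_vector_mult_scaleR Bv)
    finally show "(S0 ** S0) *v x = B *v x" .
  qed
  have "\<exists>!S. psd S \<and> S ** S = B"
  proof (rule ex1I[of _ S0])
    show "psd S0 \<and> S0 ** S0 = B" using psdS0 SS0 by simp
    fix S assume "psd S \<and> S ** S = B"
    then show "S = S0" using uniq by (simp add: matrix_eq)
  qed
  then show ?thesis unfolding psd_sqrt_def by (rule theI')
qed

lemma sym_eigs_finite:
  fixes M :: "real^'n^'n"
  assumes sym: "transpose M = M"
  shows "finite {l. real_eigenvalue M l}"
proof -
  obtain E where E: "finite E" "pairwise orthogonal E"
      "\<forall>v\<in>E. norm v = 1 \<and> M *v v = inner v (M *v v) *\<^sub>R v" "span E = UNIV"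
    using eigenbasis[OF sym] by blast
  have exp: "x = (\<Sum>v\<in>E. inner v x *\<^sub>R v)" for x by (rule onb_expand) (use E in auto)
  have "{l. real_eigenvalue M l} \<subseteq> (\<lambda>v. inner v (M *v v)) ` E"
  proof
    fix l assume "l \<in> {l. real_eigenvalue M l}"
    then obtain x where x: "x \<noteq> 0" "M *v x = l *\<^sub>R x" unfolding real_eigenvalue_def by auto
    have "\<exists>w\<in>E. inner w x \<noteq> 0"
    proof (rule ccontr)
      assume "\<not> ?thesis"
      then have "x = 0" using exp[of x] by simp
      then show False using x by simp
    qed
    then obtain w where w: "w \<in> E" "inner w x \<noteq> 0" by blast
    have "inner w (M *v x) = inner (M *v w) x" by (rule sym_inner[OF sym])
    then have "l * inner w x = inner w (M *v w) * inner w x"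
      using x(2) E(3) w(1) by (metis inner_scaleR_left inner_scaleR_right)
    then have "l = inner w (M *v w)" using w(2) by simp
    then show "l \<in> (\<lambda>v. inner v (M *v v)) ` E" using w(1) by blast
  qed
  then show ?thesis using E(1) finite_subset by blast
qed

lemma sigma_bound:
  fixes B :: "real^'n^'n"
  assumes B: "psd B" and t: "t = psd_sqrt B *v z"
  shows "sigma_min_nz B * (norm t)\<^sup>2 \<le> inner t (B *v t)"
proof -
  define S where "S = psd_sqrt B"
  have S: "psd S" "S ** S = B" using psd_sqrt_props[OF B] unfolding S_def by auto
  have symB: "transpose B = B" using B by (rule psd_sym)
  have symS: "transpose S = S" using S(1) by (rule psd_sym)
  obtain E where E: "finite E" "pairwise orthogonal E"
      "\<forall>v\<in>E. norm v = 1 \<and> B *v v = inner v (B *v v) *\<^sub>R v" "span E = UNIV"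
    using eigenbasis[OF symB] by blast
  define lam where "lam v = inner v (B *v v)" for v
  have lam0: "lam v \<ge> 0" for v unfolding lam_def by (rule psd_nonneg[OF B])
  have exp: "x = (\<Sum>v\<in>E. inner v x *\<^sub>R v)" for x by (rule onb_expand) (use E in auto)
  have Bv: "B *v v = lam v *\<^sub>R v" if "v \<in> E" for v using E(3) that unfolding lam_def by auto
  have Sv: "S *v v = sqrt (lam v) *\<^sub>R v" if "v \<in> E" for v using sqrt_on_eig[OF S Bv[OF that]] .
  have vt: "inner v t = sqrt (lam v) * inner v z" if "v \<in> E" for v
  proof -
    have "inner v t = inner (S *v v) z" unfolding t S_def[symmetric] by (rule sym_inner[OF symS])
    then show ?thesis using Sv[OF that] by simp
  qed
  define NZ where "NZ = {s \<in> singular_values B. s \<noteq> 0}"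
  have symBB: "transpose (transpose B ** B) = transpose B ** B" by (simp add: matrix_transpose_mul)
  have "finite (singular_values B)" unfolding singular_values_def
  proof -
    have "{sqrt l |l. real_eigenvalue (transpose B ** B) l} = sqrt ` {l. real_eigenvalue (transpose B ** B) l}"
      by blast
    then show "finite {sqrt l |l. real_eigenvalue (transpose B ** B) l}"
      using finite_imageI[OF sym_eigs_finite[OF symBB], of sqrt] by simp
  qed
  then have fNZ: "finite NZ" unfolding NZ_def by simp
  have lamge: "sigma_min_nz B \<le> lam v" if v: "v \<in> E" "lam v \<noteq> 0" for v
  proof -
    have "(transpose B ** B) *v v = (lam v)\<^sup>2 *\<^sub>R v"
      using Bv[OF v(1)] symB by (simp add: matrix_vector_mul_assoc[symmetric] matrix_vector_mult_scaleR power2_eq_square)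
    moreover have "v \<noteq> 0" using E(3) v(1) by auto
    ultimately have "real_eigenvalue (transpose B ** B) ((lam v)\<^sup>2)" unfolding real_eigenvalue_def by blast
    then have "sqrt ((lam v)\<^sup>2) \<in> singular_values B" unfolding singular_values_def by blast
    then have "lam v \<in> NZ" using lam0[of v] v(2) unfolding NZ_def by simp
    then show ?thesis unfolding sigma_min_nz_def NZ_def[symmetric] using fNZ by simp
  qed
  have nt: "(norm t)\<^sup>2 = (\<Sum>v\<in>E. (inner v t)\<^sup>2)"
  proof -
    have e: "(\<Sum>v\<in>E. inner v t *\<^sub>R v) = t" using exp[of t, symmetric] .
    have "(norm t)\<^sup>2 = inner t (\<Sum>v\<in>E. inner v t *\<^sub>R v)" by (simp only: e power2_norm_eq_inner)
    also have "\<dots> = (\<Sum>v\<in>E. (inner v t)\<^sup>2)" by (simp add: inner_sum_right power2_eq_square inner_commute)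
    finally show ?thesis .
  qed
  have qt: "inner t (B *v t) = (\<Sum>v\<in>E. lam v * (inner v t)\<^sup>2)"
  proof -
    have "B *v t = (\<Sum>v\<in>E. inner v t *\<^sub>R (lam v *\<^sub>R v))"
      by (subst exp) (simp add: mv_sum matrix_vector_mult_scaleR Bv)
    then show ?thesis by (simp add: inner_sum_right power2_eq_square inner_commute mult_ac)
  qed
  have "sigma_min_nz B * (norm t)\<^sup>2 = (\<Sum>v\<in>E. sigma_min_nz B * (inner v t)\<^sup>2)"
    unfolding nt by (simp add: sum_distrib_left)
  also have "\<dots> \<le> (\<Sum>v\<in>E. lam v * (inner v t)\<^sup>2)"
  proof (rule sum_mono)
    fix v assume v: "v \<in> E"
    show "sigma_min_nz B * (inner v t)\<^sup>2 \<le> lam v * (inner v t)\<^sup>2"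
    proof (cases "lam v = 0")
      case True then show ?thesis using vt[OF v] by simp
    next
      case False then show ?thesis using lamge[OF v False] by (intro mult_right_mono) simp_all
    qed
  qed
  finally show ?thesis using qt by simp
qed




definition colv :: "real^'d^'n \<Rightarrow> 'd \<Rightarrow> real^'n" where
  "colv X j = (\<chi> i. X$i$j)"

lemma colv_mm: "colv ((M::real^'n^'n) ** X) j = M *v colv X j"
  by (simp add: colv_def vec_eq_iff matrix_matrix_mult_def matrix_vector_mult_def)

lemma colv_diff: "colv (X - Y) j = colv X j - colv Y j"
  by (simp add: colv_def vec_eq_iff)

lemma colv_add: "colv (X + Y) j = colv X j + colv Y j"
  by (simp add: colv_def vec_eq_iff)

lemma colv_scale: "colv (c *\<^sub>R X) j = c *\<^sub>R colv X j"
  by (simp add: colv_def vec_eq_iff)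

lemma colv_zero: "colv 0 j = 0"
  by (simp add: colv_def vec_eq_iff)

lemma colv_ext: "X = Y \<longleftrightarrow> (\<forall>j. colv X j = colv Y j)"
  by (auto simp: colv_def vec_eq_iff)

lemma inner_colv: "inner X Y = (\<Sum>j\<in>UNIV. inner (colv X j) (colv Y j))"
  unfolding inner_vec_def colv_def by simp (rule sum.swap)

lemma norm2_colv: "(norm X)\<^sup>2 = (\<Sum>j\<in>UNIV. (norm (colv X j))\<^sup>2)"
  by (simp add: power2_norm_eq_inner inner_colv)

lemma mm_diff: "(M::real^'n^'n) ** (X - Y) = M ** X - M ** (Y::real^'d^'n)"
  by (simp add: colv_ext colv_mm colv_diff matrix_vector_mult_diff_distrib)

lemma mm_add: "(M::real^'n^'n) ** (X + Y) = M ** X + M ** (Y::real^'d^'n)"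
  by (simp add: colv_ext colv_mm colv_add matrix_vector_right_distrib)

lemma mm_scale: "(M::real^'n^'n) ** (c *\<^sub>R X) = c *\<^sub>R (M ** (X::real^'d^'n))"
  by (simp add: colv_ext colv_mm colv_scale matrix_vector_mult_scaleR)

lemma mm_zero_left: "(0::real^'n^'n) ** (X::real^'d^'n) = 0"
  by (simp add: colv_ext colv_mm colv_zero)

lemma mm_sym_inner:
  fixes M :: "real^'n^'n" and X Y :: "real^'d^'n"
  assumes "transpose M = M"
  shows "inner X (M ** Y) = inner (M ** X) Y"
  by (simp add: inner_colv colv_mm sym_inner[OF assms])

lemma proxR_nonexp:
  fixes r :: "real^'d \<Rightarrow> ereal" and X Y :: "real^'d^'n"
  assumes r: "proper_closed_convex r" and alpha: "0 < \<alpha>"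
  shows "(norm (proxR \<alpha> r X - proxR \<alpha> r Y))\<^sup>2 \<le> (norm (X - Y))\<^sup>2"
proof -
  have n2: "(norm Z)\<^sup>2 = (\<Sum>i\<in>UNIV. (norm (Z$i))\<^sup>2)" for Z :: "real^'d^'n"
    by (simp add: power2_norm_eq_inner inner_vec_def)
  show ?thesis unfolding n2
  proof (rule sum_mono)
    fix i
    have "norm (prox \<alpha> r (X$i) - prox \<alpha> r (Y$i)) \<le> norm (X$i - Y$i)" by (rule prox_nonexp[OF r alpha])
    then show "(norm ((proxR \<alpha> r X - proxR \<alpha> r Y)$i))\<^sup>2 \<le> (norm ((X - Y)$i))\<^sup>2"
      by (simp add: proxR_def power_mono)
  qed
qed

lemma AB_contr:
  fixes A B S :: "real^'n^'n" and e :: "real^'d^'n"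
  assumes Asym: "transpose A = A" and IAB: "psd (mat 1 - A ** A - B)" and S: "psd S" "S ** S = B"
  shows "(norm (A ** e))\<^sup>2 + (norm (S ** e))\<^sup>2 \<le> (norm e)\<^sup>2"
proof -
  have symS: "transpose S = S" using S(1) by (rule psd_sym)
  have col: "(norm (A *v y))\<^sup>2 + (norm (S *v y))\<^sup>2 \<le> (norm y)\<^sup>2" for y :: "real^'n"
  proof -
    have "0 \<le> inner y ((mat 1 - A ** A - B) *v y)" by (rule psd_nonneg[OF IAB])
    also have "\<dots> = inner y y - inner y (A *v (A *v y)) - inner y (S *v (S *v y))"
      using S(2) by (simp add: matrix_vector_mult_diff_rdistrib matrix_vector_mul_assoc inner_diff_right)
    also have "\<dots> = (norm y)\<^sup>2 - (norm (A *v y))\<^sup>2 - (norm (S *v y))\<^sup>2"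
      by (simp add: sym_inner[OF Asym] sym_inner[OF symS] power2_norm_eq_inner)
    finally show ?thesis by simp
  qed
  show ?thesis unfolding norm2_colv colv_mm sum.distrib[symmetric]
    by (rule sum_mono) (rule col)
qed

lemma sigma_bound_mat:
  fixes B :: "real^'n^'n" and z :: "real^'d^'n"
  assumes B: "psd B" and t: "t = psd_sqrt B ** z"
  shows "sigma_min_nz B * (norm t)\<^sup>2 \<le> inner t (B ** t)"
proof -
  have "sigma_min_nz B * (norm t)\<^sup>2 = (\<Sum>j\<in>UNIV. sigma_min_nz B * (norm (colv t j))\<^sup>2)"
    unfolding norm2_colv by (simp add: sum_distrib_left)
  also have "\<dots> \<le> (\<Sum>j\<in>UNIV. inner (colv t j) (B *v colv t j))"
    by (rule sum_mono) (rule sigma_bound[OF B], simp add: t colv_mm)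
  also have "\<dots> = inner t (B ** t)" by (simp add: inner_colv colv_mm)
  finally show ?thesis .
qed

lemma null_fixed:
  fixes A B :: "real^'n^'n" and Y :: "real^'d^'n"
  assumes B: "psd B" and B_null: "{v. B *v v = 0} = span {ones}" and A_one: "A *v ones = ones"
    and SY: "psd_sqrt B ** Y = 0"
  shows "A ** Y = Y"
proof -
  define S where "S = psd_sqrt B"
  have S: "psd S" "S ** S = B" using psd_sqrt_props[OF B] unfolding S_def by auto
  show ?thesis unfolding colv_ext
  proof
    fix j
    have "S *v colv Y j = 0" using SY unfolding S_def[symmetric] colv_ext by (simp add: colv_mm colv_zero)
    then have "B *v colv Y j = 0" using S(2) by (metis matrix_vector_mul_assoc matrix_vector_mult_0_right)
    then have "colv Y j \<in> span {ones}" using B_null by blast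
    then obtain k where k: "colv Y j = k *\<^sub>R ones" unfolding span_singleton by auto
    show "colv (A ** Y) j = colv Y j" unfolding colv_mm k by (simp add: matrix_vector_mult_scaleR A_one)
  qed
qed

lemma det_step:
  fixes A B :: "real^'n^'n" and x u us ws xs z :: "real^'d^'n" and r :: "real^'d \<Rightarrow> ereal"
  assumes r: "proper_closed_convex r" and alpha: "0 < \<alpha>" and p: "0 < p" "p \<le> 1"
    and Asym: "transpose A = A" and IAB: "psd (mat 1 - A ** A - B)" and Bpsd: "psd B"
    and B_null: "{v. B *v v = 0} = span {ones}" and A_one: "A *v ones = ones"
    and fix_x: "xs = proxR \<alpha> r (A ** (ws - psd_sqrt B ** us))"
    and fix_u: "0 = psd_sqrt B ** (ws - psd_sqrt B ** us)"
    and dz: "u - us = psd_sqrt B ** z"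
  shows "p * (let xu = flex_step \<alpha> p A B g r True (x, u) in
              (norm (fst xu - xs))\<^sup>2 + (1 / p\<^sup>2) * (norm (snd xu - us))\<^sup>2)
       + (1 - p) * (let xu = flex_step \<alpha> p A B g r False (x, u) in
              (norm (fst xu - xs))\<^sup>2 + (1 / p\<^sup>2) * (norm (snd xu - us))\<^sup>2)
       \<le> (norm (x - \<alpha> *\<^sub>R gradF g x - ws))\<^sup>2
          + (1 - p\<^sup>2 * sigma_min_nz B) * (1 / p\<^sup>2) * (norm (u - us))\<^sup>2"
proof -
  define S where "S = psd_sqrt B"
  have S: "psd S" "S ** S = B" using psd_sqrt_props[OF Bpsd] unfolding S_def by auto
  have symS: "transpose S = S" using S(1) by (rule psd_sym)
  define ys where "ys = ws - S ** us"
  have Sys: "S ** ys = 0" using fix_u unfolding ys_def S_def by simp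
  have Ays: "A ** ys = ys" using null_fixed[OF Bpsd B_null A_one] Sys unfolding S_def by blast
  define w where "w = x - \<alpha> *\<^sub>R gradF g x"
  define y where "y = w - S ** u"
  define e where "e = y - ys"
  define v where "v = w - ws"
  define dd where "dd = u - us"
  have ev: "e = v - S ** dd" unfolding e_def v_def dd_def y_def ys_def by (simp add: mm_diff algebra_simps)
  have Se: "S ** e = S ** y" unfolding e_def by (simp add: mm_diff Sys)
  have xs': "xs = proxR \<alpha> r (A ** ys)" using fix_x unfolding ys_def S_def .
  have T1: "flex_step \<alpha> p A B g r True (x, u) = (proxR \<alpha> r (A ** y), u + p *\<^sub>R (S ** y))"
    unfolding flex_step_def Let_def S_def y_def w_def by simp
  have T0: "flex_step \<alpha> p A B g r False (x, u) = (proxR \<alpha> r y, u)"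
    unfolding flex_step_def Let_def S_def y_def w_def by (simp add: mm_zero_left)
  define a where "a = (norm (A ** e))\<^sup>2"
  define b where "b = (norm (S ** e))\<^sup>2"
  define c where "c = (norm e)\<^sup>2"
  define nd where "nd = (norm dd)\<^sup>2"
  define q where "q = inner dd (S ** e)"
  define vv where "vv = (norm v)\<^sup>2"
  define sd where "sd = (norm (S ** dd))\<^sup>2"
  define sg where "sg = sigma_min_nz B"
  have F1: "a + b \<le> c" unfolding a_def b_def c_def by (rule AB_contr[OF Asym IAB S])
  have P1: "(norm (fst (flex_step \<alpha> p A B g r True (x, u)) - xs))\<^sup>2 \<le> a"
  proof -
    have "(norm (proxR \<alpha> r (A ** y) - proxR \<alpha> r (A ** ys)))\<^sup>2 \<le> (norm (A ** y - A ** ys))\<^sup>2"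
      by (rule proxR_nonexp[OF r alpha])
    then show ?thesis unfolding T1 xs' a_def e_def by (simp add: mm_diff)
  qed
  have P1u: "(norm (snd (flex_step \<alpha> p A B g r True (x, u)) - us))\<^sup>2 = nd + 2 * p * q + p\<^sup>2 * b"
  proof -
    have "snd (flex_step \<alpha> p A B g r True (x, u)) - us = dd + p *\<^sub>R (S ** e)"
      unfolding T1 dd_def Se by simp
    then show ?thesis unfolding nd_def q_def b_def power2_norm_eq_inner
      by (simp add: inner_add_left inner_add_right inner_commute power2_eq_square algebra_simps)
  qed
  have P0: "(norm (fst (flex_step \<alpha> p A B g r False (x, u)) - xs))\<^sup>2 \<le> c"
  proof -
    have "(norm (proxR \<alpha> r y - proxR \<alpha> r (A ** ys)))\<^sup>2 \<le> (norm (y - A ** ys))\<^sup>2"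
      by (rule proxR_nonexp[OF r alpha])
    then show ?thesis unfolding T0 xs' c_def e_def Ays by simp
  qed
  have P0u: "(norm (snd (flex_step \<alpha> p A B g r False (x, u)) - us))\<^sup>2 = nd"
    unfolding T0 nd_def dd_def by simp
  have qq: "q = inner (S ** dd) e" unfolding q_def by (rule mm_sym_inner[OF symS])
  have E2: "c = vv - 2 * inner v (S ** dd) + sd" unfolding c_def vv_def sd_def ev power2_norm_eq_inner
    by (simp add: inner_diff_left inner_diff_right inner_commute)
  have E3: "q = inner v (S ** dd) - sd" unfolding qq ev sd_def power2_norm_eq_inner
    by (simp add: inner_diff_right inner_commute)
  have F3: "sg * nd \<le> sd"
  proof -
    have "sd = inner dd (S ** (S ** dd))" unfolding sd_def power2_norm_eq_inner by (rule mm_sym_inner[OF symS, symmetric])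
    also have "\<dots> = inner dd (B ** dd)" using S(2) by (simp add: matrix_mul_assoc)
    finally have "sd = inner dd (B ** dd)" .
    moreover have "sg * nd \<le> inner dd (B ** dd)" unfolding sg_def nd_def
      by (rule sigma_bound_mat[OF Bpsd]) (simp add: dd_def dz)
    ultimately show ?thesis by simp
  qed
  have L: "p * (let xu = flex_step \<alpha> p A B g r True (x, u) in
              (norm (fst xu - xs))\<^sup>2 + (1 / p\<^sup>2) * (norm (snd xu - us))\<^sup>2)
       + (1 - p) * (let xu = flex_step \<alpha> p A B g r False (x, u) in
              (norm (fst xu - xs))\<^sup>2 + (1 / p\<^sup>2) * (norm (snd xu - us))\<^sup>2)
       \<le> p * (a + (1 / p\<^sup>2) * (nd + 2 * p * q + p\<^sup>2 * b)) + (1 - p) * (c + (1 / p\<^sup>2) * nd)"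
    unfolding Let_def P1u P0u using P1 P0 p
    by (intro add_mono mult_left_mono) auto
  have id1: "p * (a + (1 / p\<^sup>2) * (nd + 2 * p * q + p\<^sup>2 * b)) + (1 - p) * (c + (1 / p\<^sup>2) * nd)
      = p * (a + b) + (1 - p) * c + nd / p\<^sup>2 + 2 * q"
    using p by (simp add: field_simps power2_eq_square)
  have id2: "(1 - p\<^sup>2 * sg) * (1 / p\<^sup>2) * nd = nd / p\<^sup>2 - sg * nd"
    using p by (simp add: field_simps power2_eq_square)
  have "p * (a + b) \<le> p * c" using F1 p by (intro mult_left_mono) auto
  then have "p * (a + (1 / p\<^sup>2) * (nd + 2 * p * q + p\<^sup>2 * b)) + (1 - p) * (c + (1 / p\<^sup>2) * nd)
      \<le> vv + (1 - p\<^sup>2 * sg) * (1 / p\<^sup>2) * nd"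
    unfolding id1 id2 using E2 E3 F3 left_diff_distrib[of 1 p c] by linarith
  with L show ?thesis unfolding vv_def v_def w_def nd_def dd_def sg_def by simp
qed




lemma cf_sets:
  "sets (coin_filtration M \<theta> j) = sigma_sets (space M) (\<Union>i\<in>{..<j}. {\<theta> i -` A \<inter> space M | A. A \<subseteq> (UNIV :: bool set)})"
  "space (coin_filtration M \<theta> j) = space M"
  unfolding coin_filtration_def by (rule sets_measure_of space_measure_of; auto)+

lemma cf_gen: "i < j \<Longrightarrow> \<theta> i -` A \<inter> space M \<in> sets (coin_filtration M \<theta> j)"
  unfolding cf_sets by (rule sigma_sets.Basic) blast

lemma cf_subalg:
  assumes "\<And>i. \<theta> i \<in> measurable M (count_space UNIV)"
  shows "subalgebra M (coin_filtration M \<theta> j)"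
  unfolding subalgebra_def
proof
  show "space (coin_filtration M \<theta> j) = space M" by (rule cf_sets(2))
  have "(\<Union>i\<in>{..<j}. {\<theta> i -` A \<inter> space M | A. A \<subseteq> (UNIV :: bool set)}) \<subseteq> sets M"
    using measurable_sets[OF assms] by auto
  then show "sets (coin_filtration M \<theta> j) \<subseteq> sets M" unfolding cf_sets by (rule sets.sigma_sets_subset)
qed

lemma iter_meas:
  fixes X :: "nat \<Rightarrow> 'w \<Rightarrow> 's"
  assumes X0: "\<And>\<omega>. X 0 \<omega> = c" and XS: "\<And>k \<omega>. X (Suc k) \<omega> = stp (\<theta> k \<omega>) (X k \<omega>)"
  shows "k \<le> j \<Longrightarrow> {\<omega> \<in> space M. X k \<omega> \<in> Q} \<in> sets (coin_filtration M \<theta> j)"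
proof (induct k arbitrary: Q)
  case 0
  show ?case
  proof (cases "c \<in> Q")
    case True
    then have "{\<omega> \<in> space M. X 0 \<omega> \<in> Q} = space (coin_filtration M \<theta> j)" using X0 by (auto simp: cf_sets)
    then show ?thesis by simp
  next
    case False
    then have "{\<omega> \<in> space M. X 0 \<omega> \<in> Q} = {}" using X0 by auto
    then show ?thesis by (metis sets.empty_sets)
  qed
next
  case (Suc k)
  have kj: "k < j" "k \<le> j" using Suc.prems by auto
  have "{\<omega> \<in> space M. X (Suc k) \<omega> \<in> Q} =
      ((\<theta> k -` {True} \<inter> space M) \<inter> {\<omega> \<in> space M. X k \<omega> \<in> stp True -` Q}) \<union>
      ((\<theta> k -` {False} \<inter> space M) \<inter> {\<omega> \<in> space M. X k \<omega> \<in> stp False -` Q})"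
    using XS by auto (metis (full_types))+
  also have "\<dots> \<in> sets (coin_filtration M \<theta> j)"
  proof -
    have g1: "\<theta> k -` {True} \<inter> space M \<in> sets (coin_filtration M \<theta> j)" by (rule cf_gen[OF kj(1)])
    have g2: "\<theta> k -` {False} \<inter> space M \<in> sets (coin_filtration M \<theta> j)" by (rule cf_gen[OF kj(1)])
    have h1: "{\<omega> \<in> space M. X k \<omega> \<in> stp True -` Q} \<in> sets (coin_filtration M \<theta> j)" by (rule Suc.hyps[OF kj(2)])
    have h2: "{\<omega> \<in> space M. X k \<omega> \<in> stp False -` Q} \<in> sets (coin_filtration M \<theta> j)" by (rule Suc.hyps[OF kj(2)])
    show ?thesis by (rule sets.Un[OF sets.Int[OF g1 h1] sets.Int[OF g2 h2]])
  qed
  finally show ?case .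
qed

lemma comp_meas:
  assumes "\<And>Q. {\<omega> \<in> space M. Z \<omega> \<in> Q} \<in> sets (coin_filtration M \<theta> j)"
  shows "(\<lambda>\<omega>. \<Psi> (Z \<omega>) :: real) \<in> borel_measurable (coin_filtration M \<theta> j)"
proof (rule measurableI)
  fix B :: "real set"
  have "(\<lambda>\<omega>. \<Psi> (Z \<omega>)) -` B \<inter> space (coin_filtration M \<theta> j) = {\<omega> \<in> space M. Z \<omega> \<in> \<Psi> -` B}"
    by (auto simp: cf_sets)
  then show "(\<lambda>\<omega>. \<Psi> (Z \<omega>)) -` B \<inter> space (coin_filtration M \<theta> j) \<in> sets (coin_filtration M \<theta> j)"
    using assms[of "\<Psi> -` B"] by (simp add: vimage_def)
qed simp

lemma indep_split:
  fixes Y :: "'w \<Rightarrow> real"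
  assumes M: "prob_space M"
    and indep: "prob_space.indep_vars M (\<lambda>_. count_space UNIV) \<theta> UNIV"
    and bern: "measure M {\<omega> \<in> space M. \<theta> k \<omega>} = p"
    and Ymeas: "Y \<in> borel_measurable (coin_filtration M \<theta> k)"
    and Ybnd: "\<And>\<omega>. \<bar>Y \<omega>\<bar> \<le> K"
  shows "(\<integral>\<omega>. Y \<omega> * indicator {\<omega> \<in> space M. \<theta> k \<omega>} \<omega> \<partial>M) = (\<integral>\<omega>. Y \<omega> \<partial>M) * p"
proof -
  interpret prob_space M by (rule M)
  define E where "E i = {\<theta> i -` A \<inter> space M | A. A \<in> sets (count_space (UNIV :: bool set))}" for i
  have rv: "\<And>i. \<theta> i \<in> measurable M (count_space UNIV)" and ind: "indep_sets E UNIV"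
    using indep unfolding indep_vars_def2 E_def by auto
  have sub: "subalgebra M (coin_filtration M \<theta> k)" by (rule cf_subalg[OF rv])
  define I where "I b = (if b then {..<k} else {k})" for b
  have ist: "Int_stable (E i)" for i
    unfolding Int_stable_def E_def
  proof (clarify)
    fix A B :: "bool set"
    show "\<exists>C. (\<theta> i -` A \<inter> space M) \<inter> (\<theta> i -` B \<inter> space M) = \<theta> i -` C \<inter> space M \<and> C \<in> sets (count_space UNIV)"
      by (intro exI[of _ "A \<inter> B"]) auto
  qed
  have ind2: "indep_sets (\<lambda>b. sigma_sets (space M) (\<Union>i\<in>I b. E i)) UNIV"
  proof (rule indep_sets_collect_sigma)
    show "indep_sets E (\<Union>b\<in>UNIV. I b)" by (rule indep_sets_mono_index[OF _ ind]) simp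
    show "Int_stable (E i)" for i by (rule ist)
    show "disjoint_family_on I UNIV" unfolding disjoint_family_on_def I_def by auto
  qed
  define C where "C = {\<omega> \<in> space M. \<theta> k \<omega>}"
  have C: "C = \<theta> k -` {True} \<inter> space M" unfolding C_def by auto
  have Cs: "C \<in> sets M" unfolding C using measurable_sets[OF rv] by simp
  have Ymeas': "Y \<in> borel_measurable M" by (rule measurable_from_subalg[OF sub Ymeas])
  have Zmeas: "indicator C \<in> borel_measurable M" using Cs by simp
  have iv: "indep_var borel Y borel (indicator C)"
    unfolding indep_var_def indep_vars_def2
  proof
    show "\<forall>i\<in>UNIV. random_variable (case_bool borel borel i) (case_bool Y (indicator C) i)"
      using Ymeas' Zmeas by (auto split: bool.split)
    show "indep_sets (\<lambda>i. {case_bool Y (indicator C) i -` A \<inter> space M |A. A \<in> sets (case_bool borel borel i)}) UNIV"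
    proof (rule indep_sets_mono_sets[OF ind2])
      fix b :: bool
      show "{case_bool Y (indicator C) b -` A \<inter> space M |A. A \<in> sets (case_bool borel borel b)}
            \<subseteq> sigma_sets (space M) (\<Union>i\<in>I b. E i)"
      proof (cases b)
        case True
        have "(\<Union>i\<in>I b. E i) = (\<Union>i\<in>{..<k}. {\<theta> i -` A \<inter> space M | A. A \<subseteq> (UNIV :: bool set)})"
          using True unfolding I_def E_def by simp
        moreover have "Y -` A \<inter> space M \<in> sets (coin_filtration M \<theta> k)" if "A \<in> sets borel" for A
          using measurable_sets[OF Ymeas that] by (simp add: cf_sets)
        ultimately show ?thesis using True by (auto simp: cf_sets)
      next
        case False
        have key: "indicator C -` A \<inter> space M \<in> sigma_sets (space M) (\<Union>i\<in>I False. E i)" for A :: "real set"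
        proof -
          have eq: "indicator C -` A \<inter> space M = \<theta> k -` {b. (if b then 1 else 0 :: real) \<in> A} \<inter> space M"
            unfolding C_def by (auto simp: indicator_def)
          have "\<theta> k -` {b. (if b then 1 else 0 :: real) \<in> A} \<inter> space M \<in> sigma_sets (space M) (\<Union>i\<in>I False. E i)"
            unfolding I_def E_def by (rule sigma_sets.Basic) auto
          then show ?thesis by (simp only: eq)
        qed
        show ?thesis
        proof (rule subsetI)
          fix S assume "S \<in> {case_bool Y (indicator C) b -` A \<inter> space M |A. A \<in> sets (case_bool borel borel b)}"
          then obtain A where SA: "S = case_bool Y (indicator C) b -` A \<inter> space M" by blast
          have "S = indicator C -` A \<inter> space M" using SA False by simp
          then show "S \<in> sigma_sets (space M) (\<Union>i\<in>I b. E i)" using key[of A] False by (simp only: bool.simps)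
        qed
      qed
    qed
  qed
  have Yint: "integrable M Y"
    by (rule integrable_const_bound[where B=K]) (use Ybnd Ymeas' in auto)
  have Zint: "integrable M (indicator C :: 'w \<Rightarrow> real)"
    by (rule integrable_const_bound[where B=1]) (use Zmeas in \<open>auto simp: indicator_def\<close>)
  have "(\<integral>\<omega>. Y \<omega> * indicator C \<omega> \<partial>M) = (\<integral>\<omega>. Y \<omega> \<partial>M) * (\<integral>\<omega>. indicator C \<omega> \<partial>M)"
    by (rule indep_var_lebesgue_integral[OF iv Yint Zint])
  also have "(\<integral>\<omega>. indicator C \<omega> \<partial>M) = p" using bern Cs unfolding C_def by (simp add: Int_absorb2 sets.sets_into_space)
  finally show ?thesis unfolding C_def .
qed




lemma fi_trunc:
  "(\<forall>i<k. th i = th' i) \<Longrightarrow> flex_iter \<alpha> p A B g r x0 th k = flex_iter \<alpha> p A B g r x0 th' k"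
  by (induct k) auto

lemma fi_finite_range:
  "\<exists>R. finite R \<and> (\<forall>th. flex_iter \<alpha> p A B g r x0 th k \<in> R)"
proof -
  define T where "T = (\<lambda>S i. i \<in> S) ` Pow {..<k}"
  have "flex_iter \<alpha> p A B g r x0 th k \<in> (\<lambda>c. flex_iter \<alpha> p A B g r x0 c k) ` T" for th
  proof -
    have "(\<lambda>i. i \<in> {i. i < k \<and> th i}) \<in> T" unfolding T_def by (rule image_eqI[of _ _ "{i. i < k \<and> th i}"]) auto
    moreover have "flex_iter \<alpha> p A B g r x0 th k = flex_iter \<alpha> p A B g r x0 (\<lambda>i. i \<in> {i. i < k \<and> th i}) k"
      by (rule fi_trunc) auto
    ultimately show ?thesis by blast
  qed
  moreover have "finite T" unfolding T_def by simp
  ultimately show ?thesis by blast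
qed

lemma fun_bounded:
  assumes "finite R" "\<And>\<omega>. Z \<omega> \<in> R"
  shows "\<exists>K. \<forall>\<omega>. \<bar>(\<Psi> (Z \<omega>) :: real)\<bar> \<le> K"
proof (intro exI allI)
  fix \<omega>
  show "\<bar>\<Psi> (Z \<omega>)\<bar> \<le> Max ((\<lambda>s. \<bar>\<Psi> s\<bar>) ` R)" using assms by (intro Max_ge) auto
qed

lemma fi_range:
  "\<exists>z. snd (flex_iter \<alpha> p A B g r x0 th k) = psd_sqrt B ** z"
proof (induct k)
  case 0
  show ?case by (intro exI[of _ 0]) (simp add: colv_ext colv_mm colv_zero)
next
  case (Suc k)
  then obtain z where z: "snd (flex_iter \<alpha> p A B g r x0 th k) = psd_sqrt B ** z" by blast
  define xu where "xu = flex_iter \<alpha> p A B g r x0 th k"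
  define y where "y = fst xu - \<alpha> *\<^sub>R gradF g (fst xu) - psd_sqrt B ** snd xu"
  show ?case
  proof (cases "th k")
    case True
    have "snd (flex_iter \<alpha> p A B g r x0 th (Suc k)) = snd xu + p *\<^sub>R (psd_sqrt B ** y)"
      using True unfolding xu_def y_def by (simp add: flex_step_def Let_def)
    also have "\<dots> = psd_sqrt B ** (z + p *\<^sub>R y)" using z unfolding xu_def by (simp add: mm_add mm_scale)
    finally show ?thesis by blast
  next
    case False
    have "snd (flex_iter \<alpha> p A B g r x0 th (Suc k)) = snd xu"
      using False unfolding xu_def by (simp add: flex_step_def Let_def mm_zero_left)
    then show ?thesis using z unfolding xu_def by auto
  qed
qed

lemma bnd_int:
  assumes "finite_measure M" "f \<in> borel_measurable M" "\<And>\<omega>. \<bar>f \<omega>\<bar> \<le> (K::real)"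
  shows "integrable M f"
  using finite_measure.integrable_const_bound[OF assms(1), of f K] assms(2,3) by simp


theorem lemma2:
  fixes f :: "'n::finite \<Rightarrow> real^'d \<Rightarrow> real"
    and g :: "'n \<Rightarrow> real^'d \<Rightarrow> real^'d"
    and r :: "real^'d \<Rightarrow> ereal"
    and \<mu> L \<alpha> p :: real
    and W A B :: "real^'n^'n"
    and M :: "'w measure" and \<theta> :: "nat \<Rightarrow> 'w \<Rightarrow> bool"
    and x0 xs ws us :: "real^'d^'n"
    and k :: nat
  assumes mu: "0 \<le> \<mu>" and L: "0 < L"
    and grad: "\<And>i. is_gradient (f i) (g i)"
    and sconv: "\<And>i. strongly_convex \<mu> (f i)"
    and smooth: "\<And>i. L_smooth L (g i)"
    and r: "proper_closed_convex r"
    and W: "mixing_matrix W"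
    and A_poly: "is_poly_in A W" and B_poly: "is_poly_in B W"
    and A_sym: "transpose A = A" and A_one: "A *v ones = ones"
    and B_psd: "psd B" and B_null: "{v. B *v v = 0} = span {ones}"
    and IAB: "psd (mat 1 - A ** A - B)"
    and alpha: "0 < \<alpha>" and p: "0 < p" "p \<le> 1"
    and M: "prob_space M"
    and indep: "prob_space.indep_vars M (\<lambda>_. count_space UNIV) \<theta> UNIV"
    and bern: "\<And>i. measure M {\<omega> \<in> space M. \<theta> i \<omega>} = p"
    and fix_w: "ws = xs - \<alpha> *\<^sub>R gradF g xs"
    and fix_x: "xs = proxR \<alpha> r (A ** (ws - psd_sqrt B ** us))"
    and fix_u: "0 = psd_sqrt B ** (ws - psd_sqrt B ** us)"
    and us_range: "us \<in> range (\<lambda>v. psd_sqrt B ** v)"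
  shows "AE \<omega> in M.
     real_cond_exp M (coin_filtration M \<theta> k)
       (\<lambda>\<omega>. let xu = flex_iter \<alpha> p A B g r x0 (\<lambda>i. \<theta> i \<omega>) (Suc k)
             in (norm (fst xu - xs))\<^sup>2 + (1 / p\<^sup>2) * (norm (snd xu - us))\<^sup>2) \<omega>
     \<le> (let xu = flex_iter \<alpha> p A B g r x0 (\<lambda>i. \<theta> i \<omega>) k;
             wk = fst xu - \<alpha> *\<^sub>R gradF g (fst xu)
         in (norm (wk - ws))\<^sup>2
            + (1 - p\<^sup>2 * sigma_min_nz B) * (1 / p\<^sup>2) * (norm (snd xu - us))\<^sup>2)"
proof -
  interpret prob_space M by (rule M)
  have finM: "finite_measure M" by (rule finite_measure_axioms)
  define \<Omega> where "\<Omega> = space M"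
  define F where "F = coin_filtration M \<theta> k"
  define X where "X j \<omega> = flex_iter \<alpha> p A B g r x0 (\<lambda>i. \<theta> i \<omega>) j" for j \<omega>
  define \<Phi> where "\<Phi> xu = (norm (fst xu - xs))\<^sup>2 + (1 / p\<^sup>2) * (norm (snd xu - us))\<^sup>2" for xu
  define h where "h = (\<lambda>\<omega>. let xu = flex_iter \<alpha> p A B g r x0 (\<lambda>i. \<theta> i \<omega>) (Suc k)
             in (norm (fst xu - xs))\<^sup>2 + (1 / p\<^sup>2) * (norm (snd xu - us))\<^sup>2)"
  define GT where "GT \<omega> = \<Phi> (flex_step \<alpha> p A B g r True (X k \<omega>))" for \<omega>
  define GF where "GF \<omega> = \<Phi> (flex_step \<alpha> p A B g r False (X k \<omega>))" for \<omega>
  define C where "C = {\<omega> \<in> space M. \<theta> k \<omega>}"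
  define g' where "g' \<omega> = p * GT \<omega> + (1 - p) * GF \<omega>" for \<omega>
  have rv: "\<And>i. \<theta> i \<in> measurable M (count_space UNIV)"
    using indep unfolding indep_vars_def2 by auto
  have sub: "subalgebra M F" unfolding F_def by (rule cf_subalg[OF rv])
  have fms: "finite_measure_subalgebra M F"
    unfolding finite_measure_subalgebra_def finite_measure_subalgebra_axioms_def using finM sub by simp
  have sfs: "sigma_finite_subalgebra M F" by (rule finite_measure_subalgebra_is_sigma_finite[OF fms])
  have Cs: "C \<in> sets M"
  proof -
    have "C = \<theta> k -` {True} \<inter> space M" unfolding C_def by auto
    then show ?thesis using measurable_sets[OF rv] by simp
  qed
  have Xmeas: "{\<omega> \<in> space M. X k \<omega> \<in> Q} \<in> sets F" for Q
    unfolding F_def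
    by (rule iter_meas[of X "(x0, 0)" "flex_step \<alpha> p A B g r" \<theta> k k]) (simp_all add: X_def)
  have GTm: "GT \<in> borel_measurable F" unfolding GT_def F_def by (rule comp_meas) (use Xmeas F_def in simp)
  have GFm: "GF \<in> borel_measurable F" unfolding GF_def F_def by (rule comp_meas) (use Xmeas F_def in simp)
  obtain R where R: "finite R" "\<And>\<omega>. X k \<omega> \<in> R" using fi_finite_range[of \<alpha> p A B g r x0 k] unfolding X_def by blast
  obtain KT where KT: "\<And>\<omega>. \<bar>GT \<omega>\<bar> \<le> KT"
    using fun_bounded[of R "X k", OF R(1) R(2), of "\<lambda>s. \<Phi> (flex_step \<alpha> p A B g r True s)"] unfolding GT_def by blast
  obtain KF where KF: "\<And>\<omega>. \<bar>GF \<omega>\<bar> \<le> KF"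
    using fun_bounded[of R "X k", OF R(1) R(2), of "\<lambda>s. \<Phi> (flex_step \<alpha> p A B g r False s)"] unfolding GF_def by blast
  have GTm': "GT \<in> borel_measurable M" by (rule measurable_from_subalg[OF sub GTm])
  have GFm': "GF \<in> borel_measurable M" by (rule measurable_from_subalg[OF sub GFm])
  have hsplit: "h \<omega> = GT \<omega> * indicator C \<omega> + GF \<omega> - GF \<omega> * indicator C \<omega>" if "\<omega> \<in> space M" for \<omega>
    using that unfolding h_def GT_def GF_def \<Phi>_def X_def C_def by (simp add: Let_def indicator_def)
  have hint: "integrable M h"
  proof -
    have "integrable M (\<lambda>\<omega>. GT \<omega> * indicator C \<omega> + GF \<omega> - GF \<omega> * indicator C \<omega>)"
      using GTm' GFm' Cs
      by (intro Bochner_Integration.integrable_diff Bochner_Integration.integrable_add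
          integrable_real_mult_indicator bnd_int[OF finM GTm' KT] bnd_int[OF finM GFm' KF])
    moreover have "integrable M h \<longleftrightarrow> integrable M (\<lambda>\<omega>. GT \<omega> * indicator C \<omega> + GF \<omega> - GF \<omega> * indicator C \<omega>)"
      by (rule Bochner_Integration.integrable_cong) (simp_all add: hsplit)
    ultimately show ?thesis by simp
  qed
  have g'm: "g' \<in> borel_measurable F" unfolding g'_def using GTm GFm by measurable
  have g'int: "integrable M g'" unfolding g'_def
    by (intro Bochner_Integration.integrable_add integrable_mult_right bnd_int[OF finM GTm' KT] bnd_int[OF finM GFm' KF])
  have charact: "(\<integral>x\<in>S. h x \<partial>M) = (\<integral>x\<in>S. g' x \<partial>M)" if S: "S \<in> sets F" for S
  proof -
    have SM: "S \<in> sets M" using S sub unfolding subalgebra_def by auto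
    have indSm: "indicator S \<in> borel_measurable F" using S by simp
    have YTm: "(\<lambda>\<omega>. indicator S \<omega> * GT \<omega>) \<in> borel_measurable F" using indSm GTm by measurable
    have YFm: "(\<lambda>\<omega>. indicator S \<omega> * GF \<omega>) \<in> borel_measurable F" using indSm GFm by measurable
    have YTb: "\<bar>indicator S \<omega> * GT \<omega>\<bar> \<le> \<bar>KT\<bar>" for \<omega>
      using KT[of \<omega>] by (auto simp: indicator_def)
    have YFb: "\<bar>indicator S \<omega> * GF \<omega>\<bar> \<le> \<bar>KF\<bar>" for \<omega>
      using KF[of \<omega>] by (auto simp: indicator_def)
    have iT: "(\<integral>\<omega>. (indicator S \<omega> * GT \<omega>) * indicator C \<omega> \<partial>M) = (\<integral>\<omega>. indicator S \<omega> * GT \<omega> \<partial>M) * p"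
      unfolding C_def by (rule indep_split[OF M indep bern YTm[unfolded F_def] YTb])
    have iF: "(\<integral>\<omega>. (indicator S \<omega> * GF \<omega>) * indicator C \<omega> \<partial>M) = (\<integral>\<omega>. indicator S \<omega> * GF \<omega> \<partial>M) * p"
      unfolding C_def by (rule indep_split[OF M indep bern YFm[unfolded F_def] YFb])
    have YTm': "(\<lambda>\<omega>. indicator S \<omega> * GT \<omega>) \<in> borel_measurable M" by (rule measurable_from_subalg[OF sub YTm])
    have YFm': "(\<lambda>\<omega>. indicator S \<omega> * GF \<omega>) \<in> borel_measurable M" by (rule measurable_from_subalg[OF sub YFm])
    have intT: "integrable M (\<lambda>\<omega>. indicator S \<omega> * GT \<omega>)" by (rule bnd_int[OF finM YTm' YTb])
    have intF: "integrable M (\<lambda>\<omega>. indicator S \<omega> * GF \<omega>)" by (rule bnd_int[OF finM YFm' YFb])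
    have intTC: "integrable M (\<lambda>\<omega>. (indicator S \<omega> * GT \<omega>) * indicator C \<omega>)"
      using Cs intT by (rule integrable_real_mult_indicator)
    have intFC: "integrable M (\<lambda>\<omega>. (indicator S \<omega> * GF \<omega>) * indicator C \<omega>)"
      using Cs intF by (rule integrable_real_mult_indicator)
    have "(\<integral>x\<in>S. h x \<partial>M) = (\<integral>\<omega>. indicator S \<omega> * h \<omega> \<partial>M)"
      unfolding set_lebesgue_integral_def by simp
    also have "\<dots> = (\<integral>\<omega>. (indicator S \<omega> * GT \<omega>) * indicator C \<omega> + indicator S \<omega> * GF \<omega>
                       - (indicator S \<omega> * GF \<omega>) * indicator C \<omega> \<partial>M)"
      by (rule Bochner_Integration.integral_cong) (simp_all add: hsplit algebra_simps)
    also have "\<dots> = (\<integral>\<omega>. indicator S \<omega> * GT \<omega> \<partial>M) * p + (\<integral>\<omega>. indicator S \<omega> * GF \<omega> \<partial>M)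
                    - (\<integral>\<omega>. indicator S \<omega> * GF \<omega> \<partial>M) * p"
      using intTC intF intFC iT iF by simp
    also have "\<dots> = (\<integral>\<omega>. indicator S \<omega> * g' \<omega> \<partial>M)"
      using intT intF unfolding g'_def by (simp add: algebra_simps)
    also have "\<dots> = (\<integral>x\<in>S. g' x \<partial>M)" unfolding set_lebesgue_integral_def by simp
    finally show ?thesis .
  qed
  have ae: "AE \<omega> in M. real_cond_exp M F h \<omega> = g' \<omega>"
    by (rule sigma_finite_subalgebra.real_cond_exp_charact[OF sfs charact hint g'int g'm])
  have pw: "g' \<omega> \<le> (let xu = flex_iter \<alpha> p A B g r x0 (\<lambda>i. \<theta> i \<omega>) k;
             wk = fst xu - \<alpha> *\<^sub>R gradF g (fst xu)
         in (norm (wk - ws))\<^sup>2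
            + (1 - p\<^sup>2 * sigma_min_nz B) * (1 / p\<^sup>2) * (norm (snd xu - us))\<^sup>2)" for \<omega>
  proof -
    obtain z1 where z1: "snd (X k \<omega>) = psd_sqrt B ** z1" using fi_range unfolding X_def by blast
    obtain z2 where z2: "us = psd_sqrt B ** z2" using us_range by blast
    have dz: "snd (X k \<omega>) - us = psd_sqrt B ** (z1 - z2)" using z1 z2 by (simp add: mm_diff)
    have XX: "X k \<omega> = (fst (X k \<omega>), snd (X k \<omega>))" by simp
    have "g' \<omega> \<le> (norm (fst (X k \<omega>) - \<alpha> *\<^sub>R gradF g (fst (X k \<omega>)) - ws))\<^sup>2
          + (1 - p\<^sup>2 * sigma_min_nz B) * (1 / p\<^sup>2) * (norm (snd (X k \<omega>) - us))\<^sup>2"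
      using det_step[OF r alpha p A_sym IAB B_psd B_null A_one fix_x fix_u dz, of g "fst (X k \<omega>)"]
      unfolding g'_def GT_def GF_def \<Phi>_def Let_def by simp
    then show ?thesis unfolding X_def Let_def by simp
  qed
  show ?thesis
    using ae unfolding F_def[symmetric] h_def[symmetric]
    by (rule eventually_mono) (use pw in simp)
qed


end
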